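(* Let $c\in\mathbb{R}$. There is no function $U$ on $\mathbb{T}$ such that: $U$ is $C^1$ on $\mathbb{T}$ except at a single point $x_0\in\mathbb{T}$, where $U$ and $U'$ possess one-sided limits and $U$ is discontinuous (i.e. the one-sided limits of $U$ at $x_0$ differ); $U$ satisfies, for some constant $\gamma\in\mathbb{R}$, the profile equation $-cU+\tfrac{U^2}{2}+(1-\partial_x^2)^{-1}U=\gamma$ on $\mathbb{T}$; and $U$ satisfies the Rankine–Hugoniot condition $U(x_0-0)+U(x_0+0)=2c$. In other words, the Fornberg–Whitham equation $u_t+uu_x+(1-\partial_x^2)^{-1}u_x=0$ on $\mathbb{T}$ has no periodic traveling wave solution $u(x,t)=U(x-ct)$ with a single shock.
   Context: $\mathbb{T}=\mathbb{R}/\mathbb{Z}$, functions on $\mathbb{T}$ identified with $1$-periodic functions on $\mathbb{R}$. $(1-\partial_x^2)^{-1}U=K\ast U$, where $K$ is given on $[0,1]$ by $K(x)=\frac{\sqrt e}{e-1}\cosh(x-\tfrac12)$ and extended periodically; $U(x_0\mp0)$ denote the one-sided limits of $U$ at $x_0$ from the left and right. *)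

theory Defs
  imports "HOL-Analysis.Analysis"
begin

text \<open>Kernel of (1 - d^2/dx^2)^{-1} on the torus R/Z: given on [0,1] by
  sqrt e / (e - 1) * cosh (x - 1/2), extended 1-periodically.\<close>
definition FW_kernel :: "real \<Rightarrow> real" where
  "FW_kernel x = sqrt (exp 1) / (exp 1 - 1) * cosh (frac x - 1/2)"

definition FW_conv :: "(real \<Rightarrow> real) \<Rightarrow> real \<Rightarrow> real" where
  "FW_conv U x = integral {0..1} (\<lambda>y. FW_kernel (x - y) * U y)"

end

theory Submission
  imports Defs
begin
lemma filtermap_at_left_shift': "filtermap (\<lambda>x. x - d) (at_left a) = at_left (a - d)"
  for a d :: "real"
  by (simp add: filter_eq_iff eventually_filtermap eventually_at_filter filtermap_nhds_shift[symmetric])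

lemma per_int:
  fixes f :: "real \<Rightarrow> real"
  assumes per: "\<And>y. f (y+1) = f y" and hI: "(f has_integral I) {a..a+1}"
  shows "(f has_integral I) {0..1}"
proof -
  have pn: "f (y + real n) = f y" for y n
    by (induction n arbitrary: y) (auto simp: per add.assoc[symmetric])
  have pm: "f (y - real n) = f y" for y n
    using pn[of "y - real n" n] by simp
  have pz: "f (y + of_int m) = f y" for y m
  proof (cases "m \<ge> 0")
    case True then obtain n where "m = int n" by (metis nonneg_eq_int)
    then show ?thesis using pn by simp
  next
    case False then obtain n where "m = - int n" by (metis neg_int_cases not_le order_less_imp_le nonneg_eq_int minus_minus)
    then show ?thesis using pm[of y n] by simp
  qed
  define n where "n = floor a"
  have n1: "of_int n \<le> a" "a < of_int n + 1" unfolding n_def by linarith+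
  have "((\<lambda>x. f (x+1)) has_integral I) {a-1..a+1-1}"
    using has_integral_shift_real_ivl[OF hI, of 1] by simp
  hence h2: "(f has_integral I) {a-1..a}" using per by simp
  have int2: "f integrable_on {a-1..a+1}"
    using has_integral_combine[OF _ _ h2 hI] by auto
  have i1: "f integrable_on {of_int n..of_int n+1}"
    by (rule integrable_subinterval_real[OF int2]) (use n1 in auto)
  have i2: "f integrable_on {a..of_int n+1}"
    by (rule integrable_subinterval_real[OF int2]) (use n1 in auto)
  have i3: "f integrable_on {of_int n+1..a+1}"
    by (rule integrable_subinterval_real[OF int2]) (use n1 in auto)
  have sh: "integral {of_int n+1..a+1} f = integral {of_int n..a} f"
    using integral_shift_real_ivl[of "of_int n+1" 1 "a+1" f] per by simp
  have "I = integral {a..a+1} f" using hI by (simp add: integral_unique)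
  also have "\<dots> = integral {a..of_int n+1} f + integral {of_int n+1..a+1} f"
  proof -
    have "f integrable_on {a..a+1}" using hI by blast
    from Henstock_Kurzweil_Integration.integral_combine[OF _ _ this, of "of_int n+1"] n1 show ?thesis by simp
  qed
  also have "\<dots> = integral {of_int n..of_int n+1} f"
    unfolding sh using Henstock_Kurzweil_Integration.integral_combine[OF n1(1) _ i1] n1 by simp
  finally have "(f has_integral I) {of_int n..of_int n+1}" using i1 by (simp add: has_integral_integral)
  hence "((\<lambda>x. f (x + of_int n)) has_integral I) {of_int n - of_int n..of_int n+1-of_int n}"
    by (rule has_integral_shift_real_ivl)
  thus ?thesis using pz by simp
qed
lemma kernel_alt:
  "FW_kernel z = exp (1/2) / (exp (1/2) * exp (1/2) - 1) * cosh (frac z - 1/2)"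
proof -
  have e: "exp (1::real) = exp (1/2) * exp (1/2)" by (simp add: exp_add[symmetric])
  have "sqrt (exp (1::real)) = exp (1/2)" unfolding e by (simp add: real_sqrt_mult_self)
  thus ?thesis unfolding FW_kernel_def e by simp
qed

lemma cosh_split: "cosh (t::real) = (exp t + exp (- t)) / 2"
  by (simp add: cosh_def)

lemma frac_neg: "-1 < (z::real) \<Longrightarrow> z < 0 \<Longrightarrow> frac z = z + 1"
proof -
  assume "-1 < z" "z < 0"
  hence "floor z = -1" by (simp add: floor_eq_iff)
  thus ?thesis by (simp add: frac_def)
qed

lemma left_shift_lim:
  fixes U :: "real \<Rightarrow> real"
  assumes per: "\<And>x. U (x+1) = U x" and l: "(U \<longlongrightarrow> L) (at_left a)"
  shows "(U \<longlongrightarrow> L) (at_left (a+1))"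
proof -
  have "filtermap (\<lambda>x. x - 1) (at_left (a+1)) = at_left a"
    using filtermap_at_left_shift'[of 1 "a+1"] by simp
  moreover have "filtermap (\<lambda>x. U (x - 1)) (at_left (a+1)) = filtermap U (filtermap (\<lambda>x. x - 1) (at_left (a+1)))"
    by (simp add: filtermap_filtermap)
  ultimately have "((\<lambda>x. U (x - 1)) \<longlongrightarrow> L) (at_left (a+1))"
    using l by (simp add: filterlim_def)
  moreover have "U (x - 1) = U x" for x using per[of "x-1"] by simp
  ultimately show ?thesis by simp
qed
lemma dprod1:
  assumes "DERIV C x :> exp (-x) * u"
  shows "DERIV (\<lambda>y. exp y * C y) x :> exp x * C x + u"
proof -
  show ?thesis using DERIV_mult[OF DERIV_exp assms] by (simp add: exp_minus field_simps)
qed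

lemma dprod2:
  assumes "DERIV C x :> exp x * u"
  shows "DERIV (\<lambda>y. exp (-y) * C y) x :> - exp (-x) * C x + u"
proof -
  have e: "DERIV (\<lambda>y. exp (-y)) x :> - exp (-x)"
    by (rule derivative_eq_intros refl | simp)+
  show ?thesis using DERIV_mult[OF e assms] by (simp add: exp_minus field_simps)
qed

lemma dexpm: "DERIV (\<lambda>y. exp (-y)) x :> - exp (-x)"
  by (rule derivative_eq_intros refl | simp)+

lemma exp3: "exp ((p::real) + q + r) = exp p * exp q * exp r"
  by (simp add: exp_add)
lemma cosh_e1: "cosh ((x::real) - y - 1/2) = (exp x * exp (-y) * exp (-(1/2)) + exp (1/2) * exp (-x) * exp y) / 2"
proof -
  have a1: "x - y - 1/2 = x + (-y) + (-(1/2))" "-(x + (-y) + (-(1/2))) = 1/2 + (-x) + y" by simp_all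
  show ?thesis unfolding cosh_field_def a1 exp3 ..
qed
lemma cosh_e2: "cosh ((x::real) - y + 1/2) = (exp (1/2) * exp x * exp (-y) + exp (-x) * exp (-(1/2)) * exp y) / 2"
proof -
  have a1: "x - y + 1/2 = 1/2 + x + (-y)" "-(1/2 + x + (-y)) = (-x) + (-(1/2)) + y" by simp_all
  show ?thesis unfolding cosh_field_def a1 exp3 ..
qed
theorem mainTheorem4:
  fixes c :: real
  shows "\<not> (\<exists>(U :: real \<Rightarrow> real) (x0 :: real) (\<gamma> :: real).
      (\<forall>x. U (x + 1) = U x)
    \<and> (\<forall>x. (\<forall>k::int. x \<noteq> x0 + of_int k) \<longrightarrow> U differentiable (at x))
    \<and> continuous_on {x. \<forall>k::int. x \<noteq> x0 + of_int k} (deriv U)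
    \<and> (\<exists>uL uR. (U \<longlongrightarrow> uL) (at_left x0) \<and> (U \<longlongrightarrow> uR) (at_right x0)
              \<and> uL \<noteq> uR \<and> uL + uR = 2 * c)
    \<and> (\<exists>dL dR. (deriv U \<longlongrightarrow> dL) (at_left x0) \<and> (deriv U \<longlongrightarrow> dR) (at_right x0))
    \<and> (\<forall>x. (\<forall>k::int. x \<noteq> x0 + of_int k) \<longrightarrow>
           - c * U x + (U x)\<^sup>2 / 2 + FW_conv U x = \<gamma>))"
proof
  assume "\<exists>(U :: real \<Rightarrow> real) (x0 :: real) (\<gamma> :: real).
      (\<forall>x. U (x + 1) = U x)
    \<and> (\<forall>x. (\<forall>k::int. x \<noteq> x0 + of_int k) \<longrightarrow> U differentiable (at x))
    \<and> continuous_on {x. \<forall>k::int. x \<noteq> x0 + of_int k} (deriv U)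
    \<and> (\<exists>uL uR. (U \<longlongrightarrow> uL) (at_left x0) \<and> (U \<longlongrightarrow> uR) (at_right x0)
              \<and> uL \<noteq> uR \<and> uL + uR = 2 * c)
    \<and> (\<exists>dL dR. (deriv U \<longlongrightarrow> dL) (at_left x0) \<and> (deriv U \<longlongrightarrow> dR) (at_right x0))
    \<and> (\<forall>x. (\<forall>k::int. x \<noteq> x0 + of_int k) \<longrightarrow>
           - c * U x + (U x)\<^sup>2 / 2 + FW_conv U x = \<gamma>)"
  then obtain U :: "real \<Rightarrow> real" and a \<gamma> uL uR where
    per: "\<And>x. U (x + 1) = U x" and
    dif0: "\<And>x. (\<forall>k::int. x \<noteq> a + of_int k) \<Longrightarrow> U differentiable (at x)" and
    limL0: "(U \<longlongrightarrow> uL) (at_left a)" and limR: "(U \<longlongrightarrow> uR) (at_right a)" and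
    neq: "uL \<noteq> uR" and
    eq0: "\<And>x. (\<forall>k::int. x \<noteq> a + of_int k) \<Longrightarrow> - c * U x + (U x)\<^sup>2 / 2 + FW_conv U x = \<gamma>"
    by blast
  have offl: "\<forall>k::int. x \<noteq> a + of_int k" if "a < x" "x < a + 1" for x
  proof
    fix k :: int show "x \<noteq> a + of_int k"
    proof
      assume "x = a + of_int k"
      with that have "(0::real) < of_int k" "of_int k < (1::real)" by auto
      hence "0 < k" "k < 1" by simp_all
      thus False by simp
    qed
  qed
  have dif: "DERIV U x :> deriv U x" if "a < x" "x < a + 1" for x
    using dif0[OF offl[OF that]] by (simp add: DERIV_deriv_iff_real_differentiable)
  have eq: "- c * U x + (U x)\<^sup>2 / 2 + FW_conv U x = \<gamma>" if "a < x" "x < a + 1" for x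
    using eq0[OF offl[OF that]] .
  have limL: "(U \<longlongrightarrow> uL) (at_left (a+1))" using left_shift_lim[OF per limL0] .
  define E where "E = exp (1/2::real)"
  have Epos: "E > 0" unfolding E_def by simp
  have Egt1: "E > 1" unfolding E_def by simp
  have em: "exp (-(1/2)) = 1/E" unfolding E_def by (simp add: exp_minus')
  define k where "k = E / (E * E - 1)"
  define Ut where "Ut x = (if x \<le> a then uR else if a + 1 \<le> x then uL else U x)" for x
  define h1 where "h1 y = exp (-y) * Ut y" for y
  define h2 where "h2 y = exp y * Ut y" for y
  define C1 where "C1 x = integral {a..x} h1" for x
  define C2 where "C2 x = integral {a..x} h2" for x
  define I1 where "I1 = C1 (a+1)"
  define I2 where "I2 = C2 (a+1)"
  define A where "A = 1/E - E"
  define B where "B = E - 1/E"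
  define P1 where "P1 = E * I1"
  define P2 where "P2 = I2 / E"
  define R where "R x = k/2 * (A * (exp x * C1 x) + B * (exp (-x) * C2 x) + P1 * exp x + P2 * exp (-x))" for x
  define S where "S x = k/2 * (A * (exp x * C1 x) - B * (exp (-x) * C2 x) + P1 * exp x - P2 * exp (-x))" for x
  have UtU: "Ut x = U x" if "a < x" "x < a + 1" for x using that unfolding Ut_def by auto
  have contUt: "continuous_on {a..a+1} Ut"
  proof (rule continuous_on_IccI)
    have ev: "eventually (\<lambda>x. x \<in> {a<..<a+1}) (at_right a)"
      by (rule eventually_at_right_real) simp
    have "eventually (\<lambda>x. U x = Ut x) (at_right a)"
      by (rule eventually_mono[OF ev]) (auto simp: UtU)
    from tendsto_cong[OF this] limR show "(Ut \<longlongrightarrow> Ut a) (at_right a)"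
      unfolding Ut_def by simp
    have ev2: "eventually (\<lambda>x. x \<in> {a<..<a+1}) (at_left (a+1))"
      by (rule eventually_at_left_real) simp
    have "eventually (\<lambda>x. U x = Ut x) (at_left (a+1))"
      by (rule eventually_mono[OF ev2]) (auto simp: UtU)
    from tendsto_cong[OF this] limL show "(Ut \<longlongrightarrow> Ut (a+1)) (at_left (a+1))"
      unfolding Ut_def by simp
    fix x assume x: "a < x" "x < a + 1"
    have "isCont U x" using dif[OF x] by (rule DERIV_isCont)
    hence "(U \<longlongrightarrow> U x) (at x)" by (simp add: isCont_def)
    hence "(U \<longlongrightarrow> Ut x) (at x)" using UtU[OF x] by simp
    thus "(Ut \<longlongrightarrow> Ut x) (at x)"
      by (rule Lim_transform_within_open[where s="{a<..<a+1}"]) (use x UtU in auto)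
  qed simp
  have ch1: "continuous_on {a..a+1} h1" unfolding h1_def
    by (intro continuous_intros contUt)
  have ch2: "continuous_on {a..a+1} h2" unfolding h2_def
    by (intro continuous_intros contUt)
  have cC1: "continuous_on {a..a+1} C1" unfolding C1_def
    by (rule indefinite_integral_continuous_1) (rule integrable_continuous_real[OF ch1])
  have cC2: "continuous_on {a..a+1} C2" unfolding C2_def
    by (rule indefinite_integral_continuous_1) (rule integrable_continuous_real[OF ch2])
  have dC1: "DERIV C1 x :> h1 x" if "a < x" "x < a + 1" for x
    using integral_has_real_derivative[OF ch1, of x] that at_within_Icc_at[OF that]
    unfolding C1_def by simp
  have dC2: "DERIV C2 x :> h2 x" if "a < x" "x < a + 1" for x
    using integral_has_real_derivative[OF ch2, of x] that at_within_Icc_at[OF that]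
    unfolding C2_def by simp
  have cR: "continuous_on {a..a+1} R" unfolding R_def
    using Epos by (intro continuous_intros cC1 cC2) auto
  have cS: "continuous_on {a..a+1} S" unfolding S_def
    using Epos by (intro continuous_intros cC1 cC2) auto
  have dR: "DERIV R x :> S x" if x: "a < x" "x < a + 1" for x
  proof -
    have "DERIV R x :> k/2 * (A * (exp x * C1 x + Ut x) + B * (- exp (-x) * C2 x + Ut x) + P1 * exp x + P2 * (- exp (-x)))"
      unfolding R_def
      by (intro DERIV_cmult DERIV_add DERIV_exp dexpm dprod1 dprod2 dC1[OF x, unfolded h1_def] dC2[OF x, unfolded h2_def])
    moreover have "k/2 * (A * (exp x * C1 x + Ut x) + B * (- exp (-x) * C2 x + Ut x) + P1 * exp x + P2 * (- exp (-x))) = S x"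
      unfolding S_def A_def B_def by (simp add: algebra_simps)
    ultimately show ?thesis by simp
  qed
  have dS: "DERIV S x :> R x - Ut x" if x: "a < x" "x < a + 1" for x
  proof -
    have d1: "DERIV S x :> k/2 * (A * (exp x * C1 x + Ut x) - B * (- exp (-x) * C2 x + Ut x) + P1 * exp x - P2 * (- exp (-x)))"
      unfolding S_def
      by (intro DERIV_cmult DERIV_add DERIV_diff DERIV_exp dexpm dprod1 dprod2 dC1[OF x, unfolded h1_def] dC2[OF x, unfolded h2_def])
    have kA: "k * A = -1"
    proof -
      have "E * E > 1 * 1" using Egt1 by (intro mult_strict_mono) auto
      hence d: "E * E - 1 \<noteq> 0" by simp
      have "k * A = E / (E * E - 1) * ((1 - E * E) / E)" unfolding k_def A_def using Epos
        by (simp add: field_simps)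
      also have "\<dots> = - ((E * E - 1) / (E * E - 1)) * (E / E)" by (simp add: field_simps)
      also have "\<dots> = -1" using d Epos by simp
      finally show ?thesis .
    qed
    have e3: "k/2 * (A * (exp x * C1 x + Ut x) - B * (- exp (-x) * C2 x + Ut x) + P1 * exp x - P2 * (- exp (-x))) = R x + k * A * Ut x"
      unfolding R_def A_def B_def by (simp add: algebra_simps)
    have eq: "k/2 * (A * (exp x * C1 x + Ut x) - B * (- exp (-x) * C2 x + Ut x) + P1 * exp x - P2 * (- exp (-x))) = R x - Ut x"
      unfolding e3 kA by simp
    show ?thesis using d1 unfolding eq .
  qed
  have conv: "FW_conv U x = R x" if x: "a < x" "x < a + 1" for x
  proof -
    define f where "f y = FW_kernel (x - y) * U y" for y
    have fper: "f (y + 1) = f y" for y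
    proof -
      have "frac (x - (y + 1)) = frac (x - y)"
        unfolding frac_def by (simp add: diff_diff_eq[symmetric] floor_diff_one)
      thus ?thesis unfolding f_def FW_kernel_def per by simp
    qed
    have kern: "FW_kernel z = k * cosh (frac z - 1/2)" for z
      unfolding kernel_alt k_def E_def ..
    have iC1a: "(h1 has_integral C1 x) {a..x}" unfolding C1_def
      by (rule integrable_integral, rule integrable_continuous_real, rule continuous_on_subset[OF ch1]) (use x in auto)
    have iC2a: "(h2 has_integral C2 x) {a..x}" unfolding C2_def
      by (rule integrable_integral, rule integrable_continuous_real, rule continuous_on_subset[OF ch2]) (use x in auto)
    have int1: "h1 integrable_on {a..a+1}" by (rule integrable_continuous_real[OF ch1])
    have int2: "h2 integrable_on {a..a+1}" by (rule integrable_continuous_real[OF ch2])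
    have iC1b: "(h1 has_integral (I1 - C1 x)) {x..a+1}"
    proof -
      have "integral {a..x} h1 + integral {x..a+1} h1 = integral {a..a+1} h1"
        using Henstock_Kurzweil_Integration.integral_combine[OF _ _ int1, of x] x by simp
      moreover have "h1 integrable_on {x..a+1}" by (rule integrable_subinterval_real[OF int1]) (use x in auto)
      ultimately have "(h1 has_integral integral {x..a+1} h1) {x..a+1}"
        "integral {a..a+1} h1 - integral {a..x} h1 = integral {x..a+1} h1"
        by (simp_all add: has_integral_integral algebra_simps)
      thus ?thesis unfolding I1_def C1_def by simp
    qed
    have iC2b: "(h2 has_integral (I2 - C2 x)) {x..a+1}"
    proof -
      have "integral {a..x} h2 + integral {x..a+1} h2 = integral {a..a+1} h2"
        using Henstock_Kurzweil_Integration.integral_combine[OF _ _ int2, of x] x by simp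
      moreover have "h2 integrable_on {x..a+1}" by (rule integrable_subinterval_real[OF int2]) (use x in auto)
      ultimately have "(h2 has_integral integral {x..a+1} h2) {x..a+1}"
        "integral {a..a+1} h2 - integral {a..x} h2 = integral {x..a+1} h2"
        by (simp_all add: has_integral_integral algebra_simps)
      thus ?thesis unfolding I2_def C2_def by simp
    qed
    define v1 where "v1 = k/2 * (exp x / E * C1 x + E * exp (-x) * C2 x)"
    define v2 where "v2 = k/2 * (E * exp x * (I1 - C1 x) + exp (-x) / E * (I2 - C2 x))"
    have g1: "((\<lambda>y. k/2 * (exp x / E * h1 y + E * exp (-x) * h2 y)) has_integral v1) {a..x}"
      unfolding v1_def by (intro has_integral_mult_right has_integral_add iC1a iC2a)
    have g2: "((\<lambda>y. k/2 * (E * exp x * h1 y + exp (-x) / E * h2 y)) has_integral v2) {x..a+1}"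
      unfolding v2_def by (intro has_integral_mult_right has_integral_add iC1b iC2b)
    have f1: "(f has_integral v1) {a..x}"
    proof (rule has_integral_spike_finite[OF _ _ g1, of "{a, x}"])
      fix y assume y: "y \<in> {a..x} - {a, x}"
      hence y': "a < y" "y < x" by auto
      have "frac (x - y) = x - y" using y' x by (simp add: frac_eq)
      hence fr: "frac (x - y) - 1/2 = x - y - 1/2" by simp
      have cE: "cosh (x - y - 1/2) = (exp x * exp (-y) * (1/E) + E * exp (-x) * exp y) / 2"
        using cosh_e1[of x y] em by (simp only: E_def[symmetric])
      have "f y = k * cosh (x - y - 1/2) * Ut y" unfolding f_def kern fr using UtU[of y] y' x by simp
      also have "\<dots> = k * ((exp x * exp (-y) * (1/E) + E * exp (-x) * exp y) / 2) * Ut y" unfolding cE ..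
      also have "\<dots> = k/2 * (exp x / E * h1 y + E * exp (-x) * h2 y)" unfolding h1_def h2_def
        using Epos by (simp add: field_simps)
      finally show "f y = k/2 * (exp x / E * h1 y + E * exp (-x) * h2 y)" .
    qed simp
    have f2: "(f has_integral v2) {x..a+1}"
    proof (rule has_integral_spike_finite[OF _ _ g2, of "{x, a+1}"])
      fix y assume y: "y \<in> {x..a+1} - {x, a+1}"
      hence y': "x < y" "y < a + 1" by auto
      have "frac (x - y) = x - y + 1" using y' x by (intro frac_neg) auto
      hence fr: "frac (x - y) - 1/2 = x - y + 1/2" by simp
      have cE: "cosh (x - y + 1/2) = (E * exp x * exp (-y) + exp (-x) * (1/E) * exp y) / 2"
        using cosh_e2[of x y] em by (simp only: E_def[symmetric])
      have "f y = k * cosh (x - y + 1/2) * Ut y" unfolding f_def kern fr using UtU[of y] y' x by simp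
      also have "\<dots> = k * ((E * exp x * exp (-y) + exp (-x) * (1/E) * exp y) / 2) * Ut y" unfolding cE ..
      also have "\<dots> = k/2 * (E * exp x * h1 y + exp (-x) / E * h2 y)" unfolding h1_def h2_def
        using Epos by (simp add: field_simps)
      finally show "f y = k/2 * (E * exp x * h1 y + exp (-x) / E * h2 y)" .
    qed simp
    have "(f has_integral (v1 + v2)) {a..a+1}"
      by (rule has_integral_combine[OF _ _ f1 f2]) (use x in auto)
    hence "(f has_integral (v1 + v2)) {0..1}" by (rule per_int[where f=f, OF fper])
    hence "FW_conv U x = v1 + v2" unfolding FW_conv_def f_def[symmetric] by (rule integral_unique)
    also have "\<dots> = R x" unfolding v1_def v2_def R_def A_def B_def P1_def P2_def using Epos
      by (simp add: field_simps)
    finally show ?thesis .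
  qed
  have key: "(U x - c) * deriv U x = - S x" if x: "a < x" "x < a + 1" for x
  proof -
    have d1: "DERIV (\<lambda>y. - c * U y + (U y)\<^sup>2 / 2 + R y) x :> (- c * deriv U x + U x * deriv U x + S x)"
      by (rule derivative_eq_intros dif[OF x] dR[OF x] refl | simp)+
    have "DERIV (\<lambda>y. \<gamma>) x :> (- c * deriv U x + U x * deriv U x + S x)"
      by (rule has_field_derivative_transform_within_open[OF d1, where S="{a<..<a+1}"])
         (use x eq conv in auto)
    hence "- c * deriv U x + U x * deriv U x + S x = 0"
      using DERIV_const DERIV_unique by blast
    thus ?thesis by (simp add: algebra_simps)
  qed
  define G where "G x = (S x)^2/2 - (R x)^2/2 + c * R x - (Ut x - c)^3/3" for x
  have cG: "continuous_on {a..a+1} G" unfolding G_def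
    by (intro continuous_intros cR cS contUt) auto
  have dG: "DERIV G x :> 0" if x: "a < x" "x < a + 1" for x
  proof -
    define G1 where "G1 y = (S y)^2/2 - (R y)^2/2 + c * R y - (U y - c)^3/3" for y
    have d1: "DERIV G1 x :> (S x * (R x - Ut x) - R x * S x + c * S x - (U x - c)^2 * deriv U x)"
      unfolding G1_def
      by (rule derivative_eq_intros dif[OF x] dR[OF x] dS[OF x] refl | simp)+
    have "(U x - c)^2 * deriv U x = (U x - c) * ((U x - c) * deriv U x)" by (simp add: power2_eq_square)
    also have "\<dots> = (U x - c) * (- S x)" by (simp only: key[OF x])
    also have "\<dots> = - (U x - c) * S x" by (simp add: algebra_simps)
    finally have "S x * (R x - Ut x) - R x * S x + c * S x - (U x - c)^2 * deriv U x = 0"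
      using UtU[OF x] by (simp add: algebra_simps)
    with d1 have "DERIV G1 x :> 0" by simp
    thus ?thesis
      by (rule has_field_derivative_transform_within_open[where S="{a<..<a+1}"])
         (use x UtU in \<open>auto simp: G1_def G_def\<close>)
  qed
  have "G (a+1) = G a" by (rule DERIV_isconst_end[OF _ cG dG]) auto
  moreover have "R (a+1) = R a" "S (a+1) = S a"
  proof -
    have e1: "exp (a+1) = exp a * E * E" unfolding E_def by (simp add: exp_add[symmetric])
    have e2: "exp (-(a+1)) = exp (-a) / (E * E)" unfolding E_def by (simp add: exp_diff[symmetric] exp_add[symmetric])
    have z: "C1 a = 0" "C2 a = 0" unfolding C1_def C2_def by simp_all
    show "R (a+1) = R a" "S (a+1) = S a"
      unfolding R_def S_def z e1 e2 I1_def[symmetric] I2_def[symmetric] A_def B_def P1_def P2_def using Epos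
      by (simp_all add: field_simps)
  qed
  moreover have "Ut (a+1) = uL" "Ut a = uR" unfolding Ut_def by auto
  ultimately have "(uL - c)^3 = (uR - c)^3" unfolding G_def by simp
  hence "uL - c = uR - c" by (metis odd_real_root_power_cancel odd_numeral)
  with neq show False by simp
qed

end
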